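(* Suppose Assumption A (constant $d$) and Assumption E (constants $C_\lambda,L_\lambda$) hold, and let $\epsilon_\theta\in(0,1)$ be such that $m^\circ_\epsilon\le G_\epsilon$ for all $\epsilon\in(0,\epsilon_\theta)$. Then for all $\epsilon\in(0,\epsilon_\theta)$: (i) $\mathbb E_{\theta^\circ}P_{M|Y}(1\le M<m^-_\epsilon)\le2\exp\big(-\tfrac{7C_\lambda}{32}m^\circ_\epsilon+\log G_\epsilon\big)\le2\exp\big(-\tfrac{C_\lambda}{5}m^\circ_\epsilon+\log G_\epsilon\big)$; (ii) $\mathbb E_{\theta^\circ}P_{M|Y}(m^+_\epsilon<M\le G_\epsilon)\le2\exp\big(-\tfrac{4C_\lambda}{9}m^\circ_\epsilon+\log G_\epsilon\big)\le2\exp\big(-\tfrac{C_\lambda}{5}m^\circ_\epsilon+\log G_\epsilon\big)$.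
   Context: Let $\ell^2$ be the space of square-summable real sequences with norm $\|\cdot\|$. Fix a bounded real sequence $\lambda=(\lambda_j)_{j\ge1}$ with $\lambda_j\ne0$ for all $j$, a noise level $\epsilon\in(0,1)$ and a true parameter $\theta^\circ\in\ell^2$. The data $Y=(Y_j)_{j\ge1}$ satisfy $Y_j=\lambda_j\theta^\circ_j+\sqrt\epsilon\,\xi_j$ with $\xi_j$ i.i.d. $N(0,1)$; $\mathbb E_{\theta^\circ}$ denotes expectation under this law. Fix prior means $\eta=(\eta_j)_{j\ge1}$ with $\theta^\circ-\eta\in\ell^2$ and prior variances $\tau_j\in(0,\infty)$ (possibly depending on $\epsilon$). Put $\sigma_j:=(\lambda_j^2\epsilon^{-1}+\tau_j^{-1})^{-1}$, $\theta^Y_j:=\sigma_j(\tau_j^{-1}\eta_j+\lambda_j\epsilon^{-1}Y_j)$, and $\hat\theta^m_j:=\theta^Y_j$ for $j\le m$, $\hat\theta^m_j:=\eta_j$ for $j>m$. Define $b_m:=\sum_{j>m}(\theta^\circ_j-\eta_j)^2$, $\Lambda_j:=\lambda_j^{-2}$, $\Lambda_{(m)}:=\max_{1\le j\le m}\Lambda_j$, $\bar\Lambda_m:=m^{-1}\sum_{j=1}^m\Lambda_j$, $\Phi^m_\epsilon:=b_m\vee\epsilon m\bar\Lambda_m$, $m^\circ_\epsilon:=\min\{m\ge1:\Phi^m_\epsilon\le\Phi^k_\epsilon\ \forall k\ge1\}$, $\Phi^\circ_\epsilon:=\min_{m\ge1}\Phi^m_\epsilon$. Let $G_\epsilon:=\max\{1\le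 m\le\lfloor\epsilon^{-1}\rfloor:\epsilon\Lambda_{(m)}\le\Lambda_1\}$. Assumption A: there is $d>0$ with $\tau_j\ge d\,(\epsilon^{1/2}\Lambda_j^{1/2}\vee\epsilon\Lambda_j)$ for all $1\le j\le G_\epsilon$, $\epsilon\in(0,1)$. Assumption E: there are constants $C_\lambda\ge1$, $L_\lambda\ge1$ such that for all $k,l\in\mathbb N$: (i) $\sup_{j>k}\lambda_j^2\le C_\lambda\min_{1\le j\le k}\lambda_j^2=C_\lambda\Lambda_{(k)}^{-1}$; (ii) $\Lambda_{(kl)}\le\Lambda_{(k)}\Lambda_{(l)}$; (iii) $\Lambda_{(k)}/\bar\Lambda_k\le L_\lambda$. Hierarchical prior: a random dimension $M$ with values in $\{1,\dots,G_\epsilon\}$ and $P(M=m)\propto\exp(-3C_\lambda m/2)\prod_{j=1}^m(\tau_j/\sigma_j)^{1/2}$; conditionally on $M=m$ the parameter $\vartheta^M$ has independent coordinates $N(\eta_j,\tau_j)$ for $j\le m$ and equal to $\eta_j$ for $j>m$, and $Y_j=\lambda_j\vartheta^M_j+\sqrt\epsilon\xi_j$. The posterior of $M$ is $P_{M|Y}(M=m)=\exp(\frac12\{\|\hat\theta^m-\eta\|_\sigma^2-3C_\lambda m\})/\sum_{k=1}^{G_\epsilon}\exp(\frac12\{\|\hat\theta^k-\eta\|_\sigma^2-3C_\lambda k\})$, where $\|x\|_\sigma^2:=\sum_j x_j^2/\sigma_j$. Finally $m^-_\epsilon:=\min\{m\in\{1,\dots,m^\circ_\epsilon\}:b_m\le8L_\lambda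 C_\lambda(1+1/d)\Phi^\circ_\epsilon\}$ and $m^+_\epsilon:=\max\{m\in\{m^\circ_\epsilon,\dots,G_\epsilon\}:m\le5L_\lambda(\epsilon\Lambda_{(m^\circ_\epsilon)})^{-1}\Phi^\circ_\epsilon\}$. *)

theory Defs
  imports "HOL-Probability.Probability"
begin

(* Sequences are functions nat => real; only indices j >= 1 are meaningful
   (index 0 is ignored everywhere). *)

definition Lam :: "(nat \<Rightarrow> real) \<Rightarrow> nat \<Rightarrow> real" where
  "Lam lam j = 1 / (lam j)^2"

definition Lam_max :: "(nat \<Rightarrow> real) \<Rightarrow> nat \<Rightarrow> real" where
  "Lam_max lam m = Max (Lam lam ` {1..m})"

definition Lam_bar :: "(nat \<Rightarrow> real) \<Rightarrow> nat \<Rightarrow> real" where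
  "Lam_bar lam m = (\<Sum>j=1..m. Lam lam j) / real m"

definition bias :: "(nat \<Rightarrow> real) \<Rightarrow> (nat \<Rightarrow> real) \<Rightarrow> nat \<Rightarrow> real" where
  "bias th eta m = (\<Sum>i. (th (m + 1 + i) - eta (m + 1 + i))^2)"

definition Phi :: "(nat \<Rightarrow> real) \<Rightarrow> (nat \<Rightarrow> real) \<Rightarrow> (nat \<Rightarrow> real) \<Rightarrow> real \<Rightarrow> nat \<Rightarrow> real" where
  "Phi lam th eta eps m = max (bias th eta m) (eps * real m * Lam_bar lam m)"

definition m_opt :: "(nat \<Rightarrow> real) \<Rightarrow> (nat \<Rightarrow> real) \<Rightarrow> (nat \<Rightarrow> real) \<Rightarrow> real \<Rightarrow> nat" where
  "m_opt lam th eta eps =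
     (LEAST m. 1 \<le> m \<and> (\<forall>k\<ge>1. Phi lam th eta eps m \<le> Phi lam th eta eps k))"

definition Phi_opt :: "(nat \<Rightarrow> real) \<Rightarrow> (nat \<Rightarrow> real) \<Rightarrow> (nat \<Rightarrow> real) \<Rightarrow> real \<Rightarrow> real" where
  "Phi_opt lam th eta eps = (INF m\<in>{1..}. Phi lam th eta eps m)"

definition G :: "(nat \<Rightarrow> real) \<Rightarrow> real \<Rightarrow> nat" where
  "G lam eps = Max {m \<in> {1..nat \<lfloor>1 / eps\<rfloor>}. eps * Lam_max lam m \<le> Lam lam 1}"

definition sig :: "(nat \<Rightarrow> real) \<Rightarrow> (real \<Rightarrow> nat \<Rightarrow> real) \<Rightarrow> real \<Rightarrow> nat \<Rightarrow> real" where
  "sig lam tau eps j = 1 / ((lam j)^2 / eps + 1 / tau eps j)"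

definition thetaY :: "(nat \<Rightarrow> real) \<Rightarrow> (real \<Rightarrow> nat \<Rightarrow> real) \<Rightarrow> (nat \<Rightarrow> real) \<Rightarrow> real
     \<Rightarrow> (nat \<Rightarrow> real) \<Rightarrow> nat \<Rightarrow> real" where
  "thetaY lam tau eta eps Y j =
     sig lam tau eps j * (eta j / tau eps j + lam j * Y j / eps)"

definition thetahat :: "(nat \<Rightarrow> real) \<Rightarrow> (real \<Rightarrow> nat \<Rightarrow> real) \<Rightarrow> (nat \<Rightarrow> real) \<Rightarrow> real
     \<Rightarrow> (nat \<Rightarrow> real) \<Rightarrow> nat \<Rightarrow> nat \<Rightarrow> real" where
  "thetahat lam tau eta eps Y m j = (if j \<le> m then thetaY lam tau eta eps Y j else eta j)"

definition sig_normsq :: "(nat \<Rightarrow> real) \<Rightarrow> (nat \<Rightarrow> real) \<Rightarrow> real" where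
  "sig_normsq s x = (\<Sum>i. (x (Suc i))^2 / s (Suc i))"

definition post_weight :: "(nat \<Rightarrow> real) \<Rightarrow> (real \<Rightarrow> nat \<Rightarrow> real) \<Rightarrow> (nat \<Rightarrow> real) \<Rightarrow> real
     \<Rightarrow> real \<Rightarrow> (nat \<Rightarrow> real) \<Rightarrow> nat \<Rightarrow> real" where
  "post_weight lam tau eta C eps Y m =
     exp ((sig_normsq (sig lam tau eps) (\<lambda>j. thetahat lam tau eta eps Y m j - eta j)
           - 3 * C * real m) / 2)"

definition post_M :: "(nat \<Rightarrow> real) \<Rightarrow> (real \<Rightarrow> nat \<Rightarrow> real) \<Rightarrow> (nat \<Rightarrow> real) \<Rightarrow> real
     \<Rightarrow> real \<Rightarrow> (nat \<Rightarrow> real) \<Rightarrow> nat \<Rightarrow> real" where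
  "post_M lam tau eta C eps Y m =
     post_weight lam tau eta C eps Y m /
     (\<Sum>k=1..G lam eps. post_weight lam tau eta C eps Y k)"

(* law of the data Y under theta: independent Y_j ~ N(lam_j theta_j, eps) *)
definition data_law :: "(nat \<Rightarrow> real) \<Rightarrow> (nat \<Rightarrow> real) \<Rightarrow> real \<Rightarrow> (nat \<Rightarrow> real) measure" where
  "data_law lam th eps = PiM UNIV (\<lambda>j. density lborel (normal_density (lam j * th j) (sqrt eps)))"

definition m_minus :: "(nat \<Rightarrow> real) \<Rightarrow> (nat \<Rightarrow> real) \<Rightarrow> (nat \<Rightarrow> real) \<Rightarrow> real \<Rightarrow> real \<Rightarrow> real
     \<Rightarrow> real \<Rightarrow> nat" where
  "m_minus lam th eta C L d eps =
     Min {m \<in> {1..m_opt lam th eta eps}.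
            bias th eta m \<le> 8 * L * C * (1 + 1 / d) * Phi_opt lam th eta eps}"

definition m_plus :: "(nat \<Rightarrow> real) \<Rightarrow> (nat \<Rightarrow> real) \<Rightarrow> (nat \<Rightarrow> real) \<Rightarrow> real \<Rightarrow> real \<Rightarrow> nat" where
  "m_plus lam th eta L eps =
     Max {m \<in> {m_opt lam th eta eps..G lam eps}.
            real m \<le> 5 * L / (eps * Lam_max lam (m_opt lam th eta eps)) * Phi_opt lam th eta eps}"

end

theory Submission
  imports Defs
begin



lemma expo_id:
  fixes c b y s beta :: real
  assumes "s > 0" "1 - 2 * beta * s^2 > 0"
  shows "beta * (y-b)^2 - (y-c)^2/(2 * s^2) = beta * (c-b)^2/(1 - 2 * beta * s^2)
          - (y - (c - 2 * beta * s^2 * b)/(1 - 2 * beta * s^2))^2 / (2 * (s^2/(1-2 * beta * s^2)))"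
proof -
  define q where "q = 1 - 2 * beta * s^2"
  have q: "q > 0" using assms q_def by simp
  have qd: "q + 2 * beta * s^2 = 1" using q_def by simp
  show ?thesis unfolding q_def[symmetric] using q assms qd
    apply (simp add: field_simps power2_eq_square)
    by algebra
qed

lemma frac_helper:
  fixes A B C D K :: real
  shows "A * B = C * D \<Longrightarrow> 0 < B \<Longrightarrow> 0 < D \<Longrightarrow> 0 < K \<Longrightarrow> A / (K * D) = C / (K * B)"
  by (simp add: field_simps)

lemma gauss_pointwise:
  fixes c b y s beta :: real
  assumes "s > 0" "1 - 2 * beta * s^2 > 0"
  shows "normal_density c s y  *  exp (beta * (y-b)^2) =
     exp (beta * (c-b)^2/(1 - 2 * beta * s^2)) / sqrt (1 - 2 * beta * s^2)  * 
     normal_density ((c - 2 * beta * s^2 * b)/(1 - 2 * beta * s^2)) (s / sqrt (1 - 2 * beta * s^2)) y"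
proof -
  define q where "q = 1 - 2 * beta * s^2"
  have q: "q > 0" using assms q_def by simp
  have sq: "(s / sqrt q)^2 = s^2/q" using q by (simp add: power_divide)
  have e: "exp (beta * (y-b)^2 - (y-c)^2/(2 * s^2)) = exp (beta * (c-b)^2/q) /
      exp ((y - (c - 2 * beta * s^2 * b)/q)^2 / (2 * (s^2/q)))"
    unfolding exp_diff[symmetric] using expo_id[OF assms, where c=c and b=b and y=y] unfolding q_def by simp
  have r: "sqrt (2 * pi * (s^2/q)) = sqrt (2 * pi * s^2) / sqrt q"
    using q by (simp add: real_sqrt_divide times_divide_eq_right)
  show ?thesis unfolding normal_density_def q_def[symmetric] sq r
    using e q apply (simp add: exp_minus exp_diff field_simps)
    apply (erule frac_helper) using assms(1) by auto
qed

lemma gauss_mgf: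
  fixes c b s beta :: real
  assumes "s > 0" "1 - 2 * beta * s^2 > 0"
  shows "integrable (density lborel (normal_density c s)) (\<lambda>y. exp (beta * (y-b)^2))"
    "(\<integral>y. exp (beta * (y-b)^2) \<partial>density lborel (normal_density c s)) =
       exp (beta * (c-b)^2/(1 - 2 * beta * s^2)) / sqrt (1 - 2 * beta * s^2)"
proof -
  define K where "K = exp (beta * (c-b)^2/(1 - 2 * beta * s^2)) / sqrt (1 - 2 * beta * s^2)"
  define N where "N = normal_density ((c - 2 * beta * s^2 * b)/(1 - 2 * beta * s^2)) (s / sqrt (1 - 2 * beta * s^2))"
  have pw: "\<And>y. normal_density c s y *\<^sub>R exp (beta * (y-b)^2) = K * N y"
    using gauss_pointwise[OF assms] unfolding K_def N_def by simp
  have sp: "0 < s / sqrt (1 - 2 * beta * s^2)" using assms by simp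
  have i1: "integrable lborel (\<lambda>y. K * N y)" unfolding N_def using sp by simp
  have i2: "integrable lborel (\<lambda>y. normal_density c s y *\<^sub>R exp (beta * (y-b)^2))"
    unfolding pw by (rule i1)
  show "integrable (density lborel (normal_density c s)) (\<lambda>y. exp (beta * (y-b)^2))"
    by (subst integrable_density) (use i2 in auto)
  have "(\<integral>y. exp (beta * (y-b)^2) \<partial>density lborel (normal_density c s)) =
        (\<integral>y. K * N y \<partial>lborel)"
    by (subst integral_density) (auto simp: pw[simplified] simp del: integral_mult_right_zero)
  also have "\<dots> = K" unfolding N_def using sp by simp
  finally show "(\<integral>y. exp (beta * (y-b)^2) \<partial>density lborel (normal_density c s)) =
       exp (beta * (c-b)^2/(1 - 2 * beta * s^2)) / sqrt (1 - 2 * beta * s^2)" unfolding K_def .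
qed



lemma prod_integral_PiM:
  fixes N :: "nat \<Rightarrow> real measure" and g :: "nat \<Rightarrow> real \<Rightarrow> real" and J :: "nat set"
  assumes ps: "\<And>i. prob_space (N i)" and fin: "finite J"
    and int: "\<And>j. j \<in> J \<Longrightarrow> integrable (N j) (g j)"
  shows "integrable (PiM UNIV N) (\<lambda>Y. \<Prod>j\<in>J. g j (Y j))"
    "(\<integral>Y. (\<Prod>j\<in>J. g j (Y j)) \<partial>PiM UNIV N) = (\<Prod>j\<in>J. \<integral>y. g j y \<partial>N j)"
proof -
  interpret product_prob_space N UNIV
    by (simp add: product_prob_space_def product_prob_space_axioms_def product_sigma_finite_def ps
        prob_space_imp_sigma_finite)
  have D: "distr (PiM UNIV N) (PiM J N) (\<lambda>x. restrict x J) = PiM J N"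
    using fin by (intro distr_PiM_restrict_finite) auto
  have mr: "(\<lambda>x. restrict x J) \<in> measurable (PiM UNIV N) (PiM J N)"
    by (rule measurable_restrict_subset) auto
  have mg: "\<And>j. j \<in> J \<Longrightarrow> g j \<in> borel_measurable (N j)"
    using int by auto
  have mF: "(\<lambda>x. \<Prod>j\<in>J. g j (x j)) \<in> borel_measurable (PiM J N)"
    using mg by (intro borel_measurable_prod) (auto intro: measurable_compose[OF measurable_component_singleton])
  have eq: "\<And>Y. (\<Prod>j\<in>J. g j (restrict Y J j)) = (\<Prod>j\<in>J. g j (Y j))"
    by (auto intro!: prod.cong)
  have I1: "integrable (PiM J N) (\<lambda>x. \<Prod>j\<in>J. g j (x j))"
    using fin int by (intro product_integrable_prod) auto
  show "integrable (PiM UNIV N) (\<lambda>Y. \<Prod>j\<in>J. g j (Y j))"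
  proof -
    have "integrable (distr (PiM UNIV N) (PiM J N) (\<lambda>x. restrict x J)) (\<lambda>x. \<Prod>j\<in>J. g j (x j))"
      using I1 D by simp
    then show ?thesis unfolding integrable_distr_eq[OF mr mF] eq .
  qed
  have "(\<integral>Y. (\<Prod>j\<in>J. g j (Y j)) \<partial>PiM UNIV N) = (\<integral>x. (\<Prod>j\<in>J. g j (x j)) \<partial>PiM J N)"
    using integral_distr[OF mr mF] D eq by simp
  also have "\<dots> = (\<Prod>j\<in>J. \<integral>y. g j y \<partial>N j)"
    using fin int by (intro product_integral_prod) auto
  finally show "(\<integral>Y. (\<Prod>j\<in>J. g j (Y j)) \<partial>PiM UNIV N) = (\<Prod>j\<in>J. \<integral>y. g j y \<partial>N j)" .
qed



lemma gauss_prod_bound: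
  fixes c b beta F :: "nat \<Rightarrow> real" and J :: "nat set" and s :: real
  assumes s: "0 < s" and fin: "finite J"
    and q: "\<And>j. j \<in> J \<Longrightarrow> 1 - 2 * beta j * s^2 > 0"
    and F: "\<And>j. j \<in> J \<Longrightarrow> exp (beta j * (c j - b j)^2/(1 - 2 * beta j * s^2)) / sqrt (1 - 2 * beta j * s^2) \<le> F j"
  shows "integrable (PiM UNIV (\<lambda>j. density lborel (normal_density (c j) s))) (\<lambda>Y. \<Prod>j\<in>J. exp (beta j * (Y j - b j)^2))"
    "(\<integral>Y. (\<Prod>j\<in>J. exp (beta j * (Y j - b j)^2)) \<partial>PiM UNIV (\<lambda>j. density lborel (normal_density (c j) s))) \<le> (\<Prod>j\<in>J. F j)"
proof -
  have ps: "\<And>i. prob_space (density lborel (normal_density (c i) s))" by (simp add: prob_space_normal_density s)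
  have int: "\<And>j. j \<in> J \<Longrightarrow> integrable (density lborel (normal_density (c j) s)) (\<lambda>y. exp (beta j * (y - b j)^2))"
    by (rule gauss_mgf(1)) (use s q in auto)
  show "integrable (PiM UNIV (\<lambda>j. density lborel (normal_density (c j) s))) (\<lambda>Y. \<Prod>j\<in>J. exp (beta j * (Y j - b j)^2))"
    using prod_integral_PiM(1)[OF ps fin int] by simp
  have "(\<integral>Y. (\<Prod>j\<in>J. exp (beta j * (Y j - b j)^2)) \<partial>PiM UNIV (\<lambda>j. density lborel (normal_density (c j) s)))
     = (\<Prod>j\<in>J. \<integral>y. exp (beta j * (y - b j)^2) \<partial>density lborel (normal_density (c j) s))"
    using prod_integral_PiM(2)[OF ps fin int] by simp
  also have "\<dots> = (\<Prod>j\<in>J. exp (beta j * (c j - b j)^2/(1 - 2 * beta j * s^2)) / sqrt (1 - 2 * beta j * s^2))"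
    by (intro prod.cong refl gauss_mgf(2)) (use s q in auto)
  also have "\<dots> \<le> (\<Prod>j\<in>J. F j)"
  proof (intro prod_mono conjI)
    fix j assume j: "j \<in> J"
    have "0 < sqrt (1 - 2 * beta j * s^2)" using q[OF j] by simp
    then show "0 \<le> exp (beta j * (c j - b j)^2/(1 - 2 * beta j * s^2)) / sqrt (1 - 2 * beta j * s^2)"
      by simp
    show "exp (beta j * (c j - b j)^2/(1 - 2 * beta j * s^2)) / sqrt (1 - 2 * beta j * s^2) \<le> F j"
      using F[OF j] .
  qed
  finally show "(\<integral>Y. (\<Prod>j\<in>J. exp (beta j * (Y j - b j)^2)) \<partial>PiM UNIV (\<lambda>j. density lborel (normal_density (c j) s))) \<le> (\<Prod>j\<in>J. F j)" .
qed

lemma fac_up: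
  fixes a e x :: real
  assumes "0 < a" "a < 1" "0 < e" "0 \<le> x"
  shows "exp (a / (4 * e) * x / (1 - 2 * (a / (4 * e)) * (sqrt e)^2)) / sqrt (1 - 2 * (a / (4 * e)) * (sqrt e)^2)
     \<le> exp (1/2 + x / (2 * e))"
proof -
  have q: "1 - 2 * (a / (4 * e)) * (sqrt e)^2 = 1 - a/2" using assms by simp
  have q2: "1/2 \<le> 1 - a/2" using assms by simp
  have e1: "a / (4 * e) * x / (1 - a/2) \<le> x / (2 * e)"
  proof -
    have "a / (4 * e) * x / (1 - a/2) = x * (a / (2 * e * (2 - a)))" using assms by (simp add: field_simps)
    also have "a / (2 * e * (2 - a)) \<le> 1 / (2 * e)" using assms by (simp add: field_simps)
    then have "x * (a / (2 * e * (2 - a))) \<le> x * (1 / (2 * e))" using assms by (intro mult_left_mono) auto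
    finally show ?thesis by simp
  qed
  have ee: "2 \<le> exp (1::real)" using exp_ge_add_one_self[of 1] by simp
  have "exp (1/2::real) * exp (1/2) = exp 1" by (simp flip: exp_add)
  have sq: "1 \<le> exp (1/2) * sqrt (1 - a/2)"
  proof -
    have x: "(exp (1/2::real))^2 = exp 1" by (simp add: power2_eq_square flip: exp_add)
    have "(exp (1/2) * sqrt (1 - a/2))^2 = exp 1 * (1 - a/2)"
      using q2 unfolding power_mult_distrib x by simp
    also have "\<dots> \<ge> 2 * (1/2)" using ee q2 by (intro mult_mono) auto
    finally have "1 \<le> (exp (1/2) * sqrt (1 - a/2))^2" by simp
    moreover have "0 \<le> exp (1/2) * sqrt (1 - a/2)" using q2 by simp
    ultimately show ?thesis using power2_le_imp_le[of 1 "exp (1/2) * sqrt (1 - a/2)"] by simp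
  qed
  have "exp (a / (4 * e) * x / (1 - a/2)) / sqrt (1 - a/2) \<le> exp (x / (2 * e)) * exp (1/2)"
  proof -
    have s0: "0 < sqrt (1 - a/2)" using q2 by simp
    have "exp (a / (4 * e) * x / (1 - a/2)) \<le> exp (x / (2 * e))" using e1 by simp
    also have "\<dots> \<le> exp (x / (2 * e)) * (exp (1/2) * sqrt (1 - a/2))"
      using sq by simp
    finally show ?thesis using s0 by (simp add: divide_le_eq mult.assoc)
  qed
  then show ?thesis unfolding q by (simp add: exp_add mult.commute)
qed

lemma fac_down:
  fixes a e x d :: real
  assumes "0 < a" "a < 1" "0 < e" "0 \<le> x" "d \<le> a"
  shows "exp ((- a / (4 * e)) * x / (1 - 2 * (- a / (4 * e)) * (sqrt e)^2)) / sqrt (1 - 2 * (- a / (4 * e)) * (sqrt e)^2)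
     \<le> exp (- (d * x / (6 * e)))"
proof -
  have q: "1 - 2 * (- a / (4 * e)) * (sqrt e)^2 = 1 + a/2" using assms by simp
  have s1: "1 \<le> sqrt (1 + a/2)" using assms by simp
  have e1: "(- a / (4 * e)) * x / (1 + a/2) \<le> - (d * x / (6 * e))"
  proof -
    have eq: "(- a / (4 * e)) * x / (1 + a/2) = - (x * (a / (2 * e * (2 + a))))" using assms by (simp add: field_simps)
    moreover have "d / (6 * e) \<le> a / (2 * e * (2 + a))"
    proof -
      have "d / (6 * e) \<le> a / (6 * e)" using assms by (intro divide_right_mono) auto
      also have "\<dots> \<le> a / (2 * e * (2 + a))" using assms by (intro divide_left_mono) auto
      finally show ?thesis .
    qed
    then have le: "x * (d / (6 * e)) \<le> x * (a / (2 * e * (2 + a)))" using assms by (intro mult_left_mono) auto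
    have "d * x / (6 * e) = x * (d / (6 * e))" by simp
    then show ?thesis using eq le by linarith
  qed
  have "exp ((- a / (4 * e)) * x / (1 + a/2)) / sqrt (1 + a/2) \<le> exp ((- a / (4 * e)) * x / (1 + a/2))"
    using s1 by (simp add: divide_le_eq)
  also have "\<dots> \<le> exp (- (d * x / (6 * e)))" using e1 by simp
  finally show ?thesis unfolding q .
qed



lemma sum_shift_ivl:
  fixes k m :: nat and f :: "nat \<Rightarrow> real"
  shows "(\<Sum>i<k. f (m + 1 + i)) = (\<Sum>j\<in>{m<..m+k}. (f j :: real))"
proof (induction k)
  case 0 then show ?case by simp
next
  case (Suc k)
  have "{m<..m + Suc k} = insert (m + Suc k) {m<..m+k}" by auto
  then show ?case using Suc by simp
qed

lemma bias_summable:
  fixes th eta :: "nat \<Rightarrow> real"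
  assumes "summable (\<lambda>j. (th j - eta j)^2)"
  shows "summable (\<lambda>i. (th (m + 1 + i) - eta (m + 1 + i))^2)"
  using summable_ignore_initial_segment[OF assms, of "m+1"] by (simp add: add.commute add.left_commute)

lemma bias_nonneg:
  fixes th eta :: "nat \<Rightarrow> real"
  assumes "summable (\<lambda>j. (th j - eta j)^2)"
  shows "0 \<le> bias th eta m"
  unfolding bias_def using bias_summable[OF assms] by (intro suminf_nonneg) auto

lemma bias_split:
  fixes th eta :: "nat \<Rightarrow> real"
  assumes "summable (\<lambda>j. (th j - eta j)^2)" "m \<le> m'"
  shows "bias th eta m = (\<Sum>j\<in>{m<..m'}. (th j - eta j)^2) + bias th eta m'"
proof -
  define f where "f i = (th (m + 1 + i) - eta (m + 1 + i))^2" for i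
  have s: "summable f" unfolding f_def by (rule bias_summable[OF assms(1)])
  have "bias th eta m = (\<Sum>n. f (n + (m'-m))) + (\<Sum>i<m'-m. f i)"
    unfolding bias_def f_def[symmetric] by (rule suminf_split_initial_segment[OF s])
  also have "(\<Sum>n. f (n + (m'-m))) = bias th eta m'"
    unfolding bias_def f_def using assms(2) by (simp add: algebra_simps)
  also have "(\<Sum>i<m'-m. f i) = (\<Sum>j\<in>{m<..m'}. (th j - eta j)^2)"
    unfolding f_def using sum_shift_ivl[where f="\<lambda>j. (th j - eta j)^2" and k="m'-m" and m=m] assms(2) by simp
  finally show ?thesis by simp
qed

lemma post_bound:
  fixes Y lam eta :: "nat \<Rightarrow> real" and tau :: "real \<Rightarrow> nat \<Rightarrow> real"
  assumes "m \<in> {1..G lam eps}" "m0 \<in> {1..G lam eps}"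
  defines "SN \<equiv> \<lambda>k. sig_normsq (sig lam tau eps) (\<lambda>j. thetahat lam tau eta eps Y k j - eta j)"
  shows "post_M lam tau eta C eps Y m \<le> exp ((SN m - SN m0)/4 - 3 * C * (real m - real m0)/4)"
proof -
  let ?w = "post_weight lam tau eta C eps Y"
  have wpos: "\<And>k. 0 < ?w k" unfolding post_weight_def by simp
  define D where "D = (\<Sum>k=1..G lam eps. ?w k)"
  have Dm: "?w m \<le> D" unfolding D_def using assms(1) wpos
    by (intro member_le_sum) (auto intro: less_imp_le)
  have Dm0: "?w m0 \<le> D" unfolding D_def using assms(2) wpos
    by (intro member_le_sum) (auto intro: less_imp_le)
  define z where "z = ((SN m - 3 * C * real m) - (SN m0 - 3 * C * real m0)) / 2"
  have ratio: "?w m / ?w m0 = exp z"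
    unfolding post_weight_def z_def SN_def exp_diff[symmetric] by (simp add: diff_divide_distrib)
  have p: "post_M lam tau eta C eps Y m = ?w m / D" unfolding post_M_def D_def by simp
  have D0: "0 < D" using Dm wpos[of m] by linarith
  have p1: "post_M lam tau eta C eps Y m \<le> 1" unfolding p using Dm D0 by simp
  have p2: "post_M lam tau eta C eps Y m \<le> exp z"
    unfolding p ratio[symmetric] using Dm0 D0 wpos[of m] wpos[of m0]
    by (intro divide_left_mono) auto
  have "post_M lam tau eta C eps Y m \<le> exp (z/2)"
  proof (cases "z \<le> 0")
    case True
    then have "exp z \<le> exp (z/2)" by simp
    then show ?thesis using p2 by linarith
  next
    case False
    then have "1 \<le> exp (z/2)" by simp
    then show ?thesis using p1 by linarith
  qed
  also have "z/2 = (SN m - SN m0)/4 - 3 * C * (real m - real m0)/4"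
    unfolding z_def by (simp add: field_simps)
  finally show ?thesis .
qed

lemma sig_alt:
  fixes lam :: "nat \<Rightarrow> real" and tau :: "real \<Rightarrow> nat \<Rightarrow> real"
  assumes "0 < eps" "0 < tau eps j"
  shows "sig lam tau eps j = eps * tau eps j / ((lam j)^2 * tau eps j + eps)"
proof -
  have p: "0 < (lam j)^2 * tau eps j + eps" using assms by (simp add: add_nonneg_pos)
  show ?thesis unfolding sig_def using assms p by (simp add: field_simps)
qed

lemma alg2:
  fixes D e t l z :: real
  assumes "0 < D" "0 < e" "0 < t"
  shows "(l * t * z / D)^2 / (e * t / D) = (e * t / D) * l^2 / e * z^2 / e"
  using assms by (simp add: field_simps power2_eq_square)

lemma term_alg:
  fixes e t l y h :: real
  assumes "0 < e" "0 < t"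
  shows "((e * t / (l^2 * t + e)) * (h / t + l * y / e) - h)^2 / (e * t / (l^2 * t + e)) =
     (e * t / (l^2 * t + e)) * l^2 / e * (y - l * h)^2 / e"
proof -
  have p: "0 < l^2 * t + e" using assms by (simp add: add_nonneg_pos)
  have q: "h / t + l * y / e = (e * h + l * t * y) / (e * t)"
    using assms by (simp add: field_simps)
  have r1: "(e * t / (l^2 * t + e)) * (h / t + l * y / e) = (e * h + l * t * y) / (l^2 * t + e)"
    unfolding q using assms p by simp
  have r2: "(e * t / (l^2 * t + e)) * (h / t + l * y / e) - h = l * t * (y - l * h) / (l^2 * t + e)"
    unfolding r1 using assms p by (simp add: field_simps power2_eq_square)
  show ?thesis unfolding r2 using alg2[OF p assms] .
qed

lemma term_formula:
  fixes lam eta Y :: "nat \<Rightarrow> real" and tau :: "real \<Rightarrow> nat \<Rightarrow> real"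
  assumes "0 < eps" "0 < tau eps j"
  shows "(thetaY lam tau eta eps Y j - eta j)^2 / sig lam tau eps j =
     sig lam tau eps j * (lam j)^2 / eps * (Y j - lam j * eta j)^2 / eps"
  unfolding thetaY_def sig_alt[where tau=tau and eps=eps and j=j and lam=lam, OF assms] using term_alg[OF assms] by simp

lemma SN_formula:
  fixes lam eta Y :: "nat \<Rightarrow> real" and tau :: "real \<Rightarrow> nat \<Rightarrow> real"
  assumes "0 < eps" "\<forall>j\<ge>1. 0 < tau eps j"
  shows "sig_normsq (sig lam tau eps) (\<lambda>j. thetahat lam tau eta eps Y k j - eta j) =
     (\<Sum>j=1..k. sig lam tau eps j * (lam j)^2 / eps * (Y j - lam j * eta j)^2 / eps)"
proof -
  have "sig_normsq (sig lam tau eps) (\<lambda>j. thetahat lam tau eta eps Y k j - eta j) =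
     (\<Sum>i<k. (thetahat lam tau eta eps Y k (Suc i) - eta (Suc i))^2 / sig lam tau eps (Suc i))"
    unfolding sig_normsq_def by (rule suminf_finite) (auto simp: thetahat_def)
  also have "\<dots> = (\<Sum>i<k. sig lam tau eps (Suc i) * (lam (Suc i))^2 / eps * (Y (Suc i) - lam (Suc i) * eta (Suc i))^2 / eps)"
    by (intro sum.cong refl) (use assms in \<open>auto simp: thetahat_def term_formula\<close>)
  also have "\<dots> = (\<Sum>j=1..k. sig lam tau eps j * (lam j)^2 / eps * (Y j - lam j * eta j)^2 / eps)"
    by (simp add: sum.atLeast1_atMost_eq)
  finally show ?thesis .
qed

lemma a_alt:
  fixes lam :: "nat \<Rightarrow> real" and tau :: "real \<Rightarrow> nat \<Rightarrow> real"
  assumes "0 < eps" "0 < tau eps j"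
  shows "sig lam tau eps j * (lam j)^2 / eps = (lam j)^2 * tau eps j / ((lam j)^2 * tau eps j + eps)"
  unfolding sig_alt[where tau=tau and eps=eps and j=j and lam=lam, OF assms] using assms by simp

lemma a_bounds:
  fixes lam :: "nat \<Rightarrow> real" and tau :: "real \<Rightarrow> nat \<Rightarrow> real"
  assumes "0 < eps" "0 < tau eps j" "lam j \<noteq> 0"
  shows "0 < sig lam tau eps j * (lam j)^2 / eps" "sig lam tau eps j * (lam j)^2 / eps < 1"
proof -
  have l: "0 < (lam j)^2 * tau eps j" using assms by simp
  show "0 < sig lam tau eps j * (lam j)^2 / eps" unfolding a_alt[where tau=tau and eps=eps and j=j and lam=lam, OF assms(1,2)] using l assms by (intro divide_pos_pos add_pos_pos) auto
  have p: "0 < (lam j)^2 * tau eps j + eps" using l assms by (intro add_pos_pos) auto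
  show "sig lam tau eps j * (lam j)^2 / eps < 1" unfolding a_alt[where tau=tau and eps=eps and j=j and lam=lam, OF assms(1,2)] apply (simp add: divide_less_eq) using p assms by linarith
qed

lemma a_lower:
  fixes lam :: "nat \<Rightarrow> real" and tau :: "real \<Rightarrow> nat \<Rightarrow> real"
  assumes "0 < eps" "0 < tau eps j" "lam j \<noteq> 0" "0 < d" "tau eps j \<ge> d * (eps * Lam lam j)"
  shows "d / (1 + d) \<le> sig lam tau eps j * (lam j)^2 / eps"
proof -
  have l: "0 < (lam j)^2" using assms by simp
  have t: "d * eps \<le> (lam j)^2 * tau eps j"
    using assms(5) l unfolding Lam_def by (simp add: field_simps)
  show ?thesis unfolding a_alt[where tau=tau and eps=eps and j=j and lam=lam, OF assms(1,2)] using t l assms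
    by (simp add: field_simps add_pos_pos)
qed

lemma Lam_pos:
  fixes lam :: "nat \<Rightarrow> real"
  assumes "lam j \<noteq> 0" shows "0 < Lam lam j"
  unfolding Lam_def using assms by simp

lemma Lam_max_props:
  fixes lam :: "nat \<Rightarrow> real"
  assumes "1 \<le> k"
  shows "\<And>j. j \<in> {1..k} \<Longrightarrow> Lam lam j \<le> Lam_max lam k"
    "\<exists>i\<in>{1..k}. Lam lam i = Lam_max lam k"
proof -
  show "\<And>j. j \<in> {1..k} \<Longrightarrow> Lam lam j \<le> Lam_max lam k" unfolding Lam_max_def by simp
  have "Lam_max lam k \<in> Lam lam ` {1..k}" unfolding Lam_max_def using assms by (intro Max_in) auto
  then show "\<exists>i\<in>{1..k}. Lam lam i = Lam_max lam k" by auto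
qed

lemma Lam_bar_pos:
  fixes lam :: "nat \<Rightarrow> real"
  assumes "1 \<le> k" "\<forall>j\<ge>1. lam j \<noteq> 0"
  shows "0 < Lam_bar lam k"
proof -
  have "0 < (\<Sum>j=1..k. Lam lam j)" using assms by (intro sum_pos Lam_pos) auto
  then show ?thesis unfolding Lam_bar_def using assms by simp
qed

lemma m_opt_props:
  fixes lam th eta :: "nat \<Rightarrow> real"
  assumes eps: "0 < eps"
    and lam_bdd: "\<exists>B. \<forall>j. \<bar>lam j\<bar> \<le> B"
    and lam_nz: "\<forall>j\<ge>1. lam j \<noteq> 0"
    and l2: "summable (\<lambda>j. (th j - eta j)^2)"
  shows "1 \<le> m_opt lam th eta eps"
    "\<And>k. 1 \<le> k \<Longrightarrow> Phi lam th eta eps (m_opt lam th eta eps) \<le> Phi lam th eta eps k"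
    "Phi_opt lam th eta eps = Phi lam th eta eps (m_opt lam th eta eps)"
proof -
  let ?P = "Phi lam th eta eps"
  obtain B where B: "\<forall>j. \<bar>lam j\<bar> \<le> B" using lam_bdd by blast
  have B0: "0 < B" using B[rule_format, of 1] lam_nz by fastforce
  have LB: "1 / B^2 \<le> Lam lam j" if "1 \<le> j" for j
  proof -
    have l: "0 < (lam j)^2" using lam_nz that by simp
    have "(lam j)^2 \<le> B^2" using B[rule_format, of j] by (metis abs_le_square_iff abs_of_pos B0)
    then show ?thesis unfolding Lam_def using l B0 by (intro divide_left_mono) auto
  qed
  have grow: "eps * real k / B^2 \<le> ?P k" if "1 \<le> k" for k
  proof -
    have "real k * (1 / B^2) \<le> (\<Sum>j=1..k. Lam lam j)"
      using sum_mono[of "{1..k}" "\<lambda>_. 1/B^2" "Lam lam"] LB by simp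
    then have "eps * (real k * (1 / B^2)) \<le> eps * (\<Sum>j=1..k. Lam lam j)"
      using eps by (intro mult_left_mono) auto
    then have "eps * real k / B^2 \<le> eps * (\<Sum>j=1..k. Lam lam j)" by simp
    also have "\<dots> = eps * real k * Lam_bar lam k" unfolding Lam_bar_def using that by simp
    also have "\<dots> \<le> ?P k" unfolding Phi_def by simp
    finally show ?thesis .
  qed
  define K where "K = nat \<lceil>?P 1 * B^2 / eps\<rceil> + 1"
  have big: "?P 1 < ?P k" if "K < k" for k
  proof -
    have "?P 1 * B^2 / eps < real k" using that unfolding K_def by linarith
    then have "?P 1 < eps * real k / B^2" using eps B0 by (simp add: field_simps)
    also have "\<dots> \<le> ?P k" using grow that unfolding K_def by simp
    finally show ?thesis .
  qed
  define S where "S = {1..K}"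
  have Sfin: "finite S" "S \<noteq> {}" unfolding S_def K_def by auto
  have "Min (?P ` S) \<in> ?P ` S" using Sfin by simp
  then obtain m where m: "m \<in> S" "?P m = Min (?P ` S)" by auto
  have ex: "\<exists>m. 1 \<le> m \<and> (\<forall>k\<ge>1. ?P m \<le> ?P k)"
  proof (intro exI conjI allI impI)
    show "1 \<le> m" using m S_def by simp
    fix k :: nat assume k: "1 \<le> k"
    show "?P m \<le> ?P k"
    proof (cases "k \<le> K")
      case True then show ?thesis using m Sfin k S_def by simp
    next
      case False
      then have "?P 1 < ?P k" using big by simp
      moreover have "?P m \<le> ?P 1" using m Sfin S_def K_def by simp
      ultimately show ?thesis by simp
    qed
  qed
  have L: "1 \<le> m_opt lam th eta eps \<and> (\<forall>k\<ge>1. ?P (m_opt lam th eta eps) \<le> ?P k)"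
    unfolding m_opt_def by (rule LeastI_ex[OF ex])
  then show "1 \<le> m_opt lam th eta eps"
    "\<And>k. 1 \<le> k \<Longrightarrow> ?P (m_opt lam th eta eps) \<le> ?P k" by auto
  show "Phi_opt lam th eta eps = ?P (m_opt lam th eta eps)"
    unfolding Phi_opt_def using L by (intro cInf_eq_minimum) auto
qed


lemma integral_le_nonint:
  fixes f g :: "'a \<Rightarrow> real"
  assumes "integrable M g" "\<And>x. x \<in> space M \<Longrightarrow> f x \<le> g x" "\<And>x. x \<in> space M \<Longrightarrow> 0 \<le> g x"
  shows "integral\<^sup>L M f \<le> integral\<^sup>L M g"
proof (cases "integrable M f")
  case True then show ?thesis using assms by (intro integral_mono) auto
next
  case False
  then have "integral\<^sup>L M f = 0" by (rule not_integrable_integral_eq)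
  then show ?thesis using assms by (simp add: integral_nonneg_AE)
qed

lemma sum_split_ivl:
  fixes f :: "nat \<Rightarrow> real"
  assumes "m0 \<le> m"
  shows "(\<Sum>j=1..m. f j) = (\<Sum>j=1..m0. f j) + (\<Sum>j\<in>{m0<..m}. f j)"
proof -
  have "{1..m} = {1..m0} \<union> {m0<..m}" using assms by auto
  moreover have "{1..m0} \<inter> {m0<..m} = {}" by auto
  ultimately show ?thesis by (simp add: sum.union_disjoint)
qed



lemma common_facts:
  fixes lam th eta :: "nat \<Rightarrow> real" and C L eps :: real
  assumes eps: "0 < eps"
    and lam_bdd: "\<exists>B. \<forall>j. \<bar>lam j\<bar> \<le> B"
    and lam_nz: "\<forall>j\<ge>1. lam j \<noteq> 0"
    and l2: "summable (\<lambda>j. (th j - eta j)^2)"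
    and E_L: "L \<ge> 1"
    and E3: "\<forall>k\<ge>1. Lam_max lam k / Lam_bar lam k \<le> L"
  defines "m0 \<equiv> m_opt lam th eta eps" and "P0 \<equiv> Phi_opt lam th eta eps" and "Lm \<equiv> Lam_max lam (m_opt lam th eta eps)"
  shows "1 \<le> m0" "bias th eta m0 \<le> P0" "0 \<le> P0" "0 < Lm"
    "real m0 \<le> L * (P0 / (eps * Lm))"
    "\<And>j. j \<in> {1..m0} \<Longrightarrow> Lam lam j \<le> Lm"
    "\<exists>i\<in>{1..m0}. Lam lam i = Lm"
proof -
  note mo = m_opt_props[OF eps lam_bdd lam_nz l2]
  show m1: "1 \<le> m0" unfolding m0_def by (rule mo(1))
  have P: "P0 = Phi lam th eta eps m0" unfolding P0_def m0_def by (rule mo(3))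
  show "bias th eta m0 \<le> P0" unfolding P Phi_def by simp
  have bn: "0 \<le> bias th eta m0" by (rule bias_nonneg[OF l2])
  then show "0 \<le> P0" unfolding P Phi_def by simp
  show LJ: "\<And>j. j \<in> {1..m0} \<Longrightarrow> Lam lam j \<le> Lm"
    unfolding Lm_def m0_def using Lam_max_props(1)[OF mo(1)] by blast
  show "\<exists>i\<in>{1..m0}. Lam lam i = Lm"
    unfolding Lm_def m0_def using Lam_max_props(2)[OF mo(1)] by blast
  have "0 < Lam lam 1" using lam_nz by (intro Lam_pos) auto
  also have "Lam lam 1 \<le> Lm" using LJ m1 by auto
  finally show Lm0: "0 < Lm" .
  have Lb: "0 < Lam_bar lam m0" using Lam_bar_pos[OF m1 lam_nz] .
  have "Lm / Lam_bar lam m0 \<le> L" using E3 m1 unfolding Lm_def m0_def by auto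
  then have LmL: "Lm \<le> L * Lam_bar lam m0" using Lb by (simp add: divide_le_eq)
  have "eps * real m0 * Lam_bar lam m0 \<le> P0" unfolding P Phi_def by simp
  have "eps * Lm * real m0 \<le> eps * (L * Lam_bar lam m0) * real m0"
    using LmL eps by (intro mult_right_mono mult_left_mono) auto
  also have "\<dots> = L * (eps * real m0 * Lam_bar lam m0)" by simp
  also have "\<dots> \<le> L * P0" using \<open>eps * real m0 * Lam_bar lam m0 \<le> P0\<close> E_L by (intro mult_left_mono) auto
  finally have "eps * Lm * real m0 \<le> L * P0" .
  then show "real m0 \<le> L * (P0 / (eps * Lm))" using eps Lm0 by (simp add: field_simps)
qed

lemma lin_aux:
  fixes k u w cq v :: real
  shows "k \<le> u \<Longrightarrow> w \<le> cq \<Longrightarrow> cq \<le> v \<Longrightarrow> - 3 * u / 4 + k / 2 + w / 2 \<le> - 3 * u / 4 + u / 2 + v / 2"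
  by linarith

lemma ident_aux:
  fixes C mm m0 :: real
  shows "- 3 * (C * (mm - m0)) / 4 + C * (mm - m0) / 2 + C * (mm / 5) / 2 = C * (m0 / 4 - 3 * mm / 20)"
  by (simp add: field_simps)

lemma part_ii:
  fixes lam th eta :: "nat \<Rightarrow> real" and tau :: "real \<Rightarrow> nat \<Rightarrow> real" and C L eps :: real
  assumes eps: "0 < eps" "eps < 1"
    and lam_bdd: "\<exists>B. \<forall>j. \<bar>lam j\<bar> \<le> B"
    and lam_nz: "\<forall>j\<ge>1. lam j \<noteq> 0"
    and l2: "summable (\<lambda>j. (th j - eta j)^2)"
    and tpos: "\<forall>j\<ge>1. 0 < tau eps j"
    and E_C: "C \<ge> 1" and E_L: "L \<ge> 1"
    and E1: "\<forall>k\<ge>1. (SUP j\<in>{k<..}. (lam j)^2) \<le> C * Min ((\<lambda>j. (lam j)^2) ` {1..k})"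
    and E3: "\<forall>k\<ge>1. Lam_max lam k / Lam_bar lam k \<le> L"
    and mG: "m_opt lam th eta eps \<le> G lam eps"
  shows "(\<integral>Y. (\<Sum>m\<in>{m_plus lam th eta L eps<..G lam eps}. post_M lam tau eta C eps Y m)
          \<partial>data_law lam th eps)
        \<le> 2 * exp (- (4 * C / 9) * real (m_opt lam th eta eps) + ln (real (G lam eps)))"
proof -
  define m0 where "m0 = m_opt lam th eta eps"
  define P0 where "P0 = Phi_opt lam th eta eps"
  define Lm where "Lm = Lam_max lam (m_opt lam th eta eps)"
  define Gn where "Gn = G lam eps"
  define Q where "Q = P0 / (eps * Lm)"
  note cf = common_facts[OF eps(1) lam_bdd lam_nz l2 E_L E3, folded m0_def P0_def Lm_def]
  have m1: "1 \<le> m0" by (rule cf(1))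
  have Q0: "0 \<le> Q" unfolding Q_def using cf(3,4) eps by simp
  have m0Q: "real m0 \<le> L * Q" unfolding Q_def by (rule cf(5))
  have mG': "m0 \<le> Gn" unfolding m0_def Gn_def by (rule mG)
  obtain B where B: "\<forall>j. \<bar>lam j\<bar> \<le> B" using lam_bdd by blast
  have lamC: "(lam j)^2 \<le> C / Lm" if j: "m0 < j" for j
  proof -
    have bdd: "bdd_above ((\<lambda>j. (lam j)^2) ` {m0<..})"
    proof
      fix x assume "x \<in> (\<lambda>j. (lam j)^2) ` {m0<..}"
      then obtain i where "x = (lam i)^2" by auto
      then show "x \<le> B^2" using power_mono[OF B[rule_format, of i] abs_ge_zero, of 2] by simp
    qed
    have "(lam j)^2 \<le> (SUP j\<in>{m0<..}. (lam j)^2)" using j by (intro cSUP_upper bdd) auto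
    also have "\<dots> \<le> C * Min ((\<lambda>j. (lam j)^2) ` {1..m0})" using E1 m1 by auto
    also have "\<dots> \<le> C / Lm"
    proof -
      obtain i where i: "i \<in> {1..m0}" "Lam lam i = Lm" using cf(7) by blast
      have "Min ((\<lambda>j. (lam j)^2) ` {1..m0}) \<le> (lam i)^2" using i by (intro Min_le) auto
      also have "(lam i)^2 = 1 / Lm" using i(2)[symmetric] unfolding Lam_def by simp
      finally show ?thesis using E_C by (simp add: divide_inverse mult_left_mono)
    qed
    finally show ?thesis .
  qed
  define Sp where "Sp = {m \<in> {m0..Gn}. real m \<le> 5 * L / (eps * Lm) * P0}"
  have Sp_eq: "5 * L / (eps * Lm) * P0 = 5 * L * Q" unfolding Q_def by simp
  have m0Sp: "m0 \<in> Sp" unfolding Sp_def Sp_eq using mG' m0Q Q0 E_L by auto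
  have Spfin: "finite Sp" unfolding Sp_def by simp
  have mp: "m_plus lam th eta L eps = Max Sp"
    unfolding m_plus_def Sp_def m0_def Gn_def Lm_def P0_def ..
  have mbig: "m0 < m \<and> 5 * L * Q < real m \<and> m \<le> Gn" if m: "m \<in> {m_plus lam th eta L eps<..Gn}" for m
  proof -
    have "m0 \<le> Max Sp" using m0Sp Spfin by simp
    then have "m0 < m" using m mp by simp
    moreover have "m \<notin> Sp" using m mp Spfin by (metis Max_ge greaterThanAtMost_iff not_le)
    ultimately show ?thesis using m unfolding Sp_def Sp_eq by auto
  qed
  define a where "a j = sig lam tau eps j * (lam j)^2 / eps" for j
  define h where "h m Y = exp (- 3 * C * (real m - real m0) / 4) *
      (\<Prod>j\<in>{m0<..m}. exp (a j / (4 * eps) * (Y j - lam j * eta j)^2))" for m and Y :: "nat \<Rightarrow> real"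
  have se: "0 < sqrt eps" "(sqrt eps)^2 = eps" using eps by auto
  have DL: "data_law lam th eps = PiM UNIV (\<lambda>j. density lborel (normal_density (lam j * th j) (sqrt eps)))"
    unfolding data_law_def ..
  have ab: "0 < a j \<and> a j < 1" if "1 \<le> j" for j
    unfolding a_def using a_bounds[of eps tau j lam] eps tpos lam_nz that by auto
  have pw: "post_M lam tau eta C eps Y m \<le> h m Y" if m: "m \<in> {m_plus lam th eta L eps<..Gn}" for m Y
  proof -
    have mm: "m0 < m" "m \<le> Gn" using mbig[OF m] by auto
    have "post_M lam tau eta C eps Y m \<le>
      exp ((sig_normsq (sig lam tau eps) (\<lambda>j. thetahat lam tau eta eps Y m j - eta j) -
            sig_normsq (sig lam tau eps) (\<lambda>j. thetahat lam tau eta eps Y m0 j - eta j))/4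
           - 3 * C * (real m - real m0)/4)"
      using mm m1 mG' unfolding Gn_def by (intro post_bound) auto
    also have "sig_normsq (sig lam tau eps) (\<lambda>j. thetahat lam tau eta eps Y m j - eta j) -
            sig_normsq (sig lam tau eps) (\<lambda>j. thetahat lam tau eta eps Y m0 j - eta j)
          = (\<Sum>j\<in>{m0<..m}. a j * (Y j - lam j * eta j)^2 / eps)"
      unfolding SN_formula[where tau=tau and eps=eps, OF eps(1) tpos] a_def sum_split_ivl[OF less_imp_le[OF mm(1)]] by simp
    also have "(\<Sum>j\<in>{m0<..m}. a j * (Y j - lam j * eta j)^2 / eps) / 4 =
        (\<Sum>j\<in>{m0<..m}. a j / (4 * eps) * (Y j - lam j * eta j)^2)"
      by (simp add: sum_divide_distrib mult.commute)
    also have "exp ((\<Sum>j\<in>{m0<..m}. a j / (4 * eps) * (Y j - lam j * eta j)^2) - 3 * C * (real m - real m0)/4)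
        = h m Y"
    proof -
      have "exp ((\<Sum>j\<in>{m0<..m}. a j / (4 * eps) * (Y j - lam j * eta j)^2) - 3 * C * (real m - real m0)/4)
        = exp (- 3 * C * (real m - real m0) / 4 + (\<Sum>j\<in>{m0<..m}. a j / (4 * eps) * (Y j - lam j * eta j)^2))"
        by (rule arg_cong[where f=exp]) linarith
      also have "\<dots> = exp (- 3 * C * (real m - real m0) / 4) * exp (\<Sum>j\<in>{m0<..m}. a j / (4 * eps) * (Y j - lam j * eta j)^2)"
        by (rule exp_add)
      also have "exp (\<Sum>j\<in>{m0<..m}. a j / (4 * eps) * (Y j - lam j * eta j)^2) =
          (\<Prod>j\<in>{m0<..m}. exp (a j / (4 * eps) * (Y j - lam j * eta j)^2))"
        by (rule exp_sum) simp
      finally show ?thesis unfolding h_def .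
    qed
    finally show ?thesis .
  qed
  have hint: "integrable (data_law lam th eps) (h m)
      \<and> integral\<^sup>L (data_law lam th eps) (h m) \<le> exp (- 4 * C / 9 * real m0)"
    if m: "m \<in> {m_plus lam th eta L eps<..Gn}" for m
  proof -
    have mm: "m0 < m" "5 * L * Q < real m" "m \<le> Gn" using mbig[OF m] by auto
    define x where "x j = (lam j * th j - lam j * eta j)^2" for j
    have qpos: "\<And>j. j \<in> {m0<..m} \<Longrightarrow> 1 - 2 * (a j / (4 * eps)) * (sqrt eps)^2 > 0"
    proof -
      fix j assume j: "j \<in> {m0<..m}"
      then have "a j < 1" using ab m1 by auto
      then show "1 - 2 * (a j / (4 * eps)) * (sqrt eps)^2 > 0" using se eps by simp
    qed
    have Fb: "\<And>j. j \<in> {m0<..m} \<Longrightarrow>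
        exp (a j / (4 * eps) * (lam j * th j - lam j * eta j)^2/(1 - 2 * (a j / (4 * eps)) * (sqrt eps)^2)) /
          sqrt (1 - 2 * (a j / (4 * eps)) * (sqrt eps)^2) \<le> exp (1/2 + x j / (2 * eps))"
      unfolding x_def using ab m1 eps by (intro fac_up) auto
    note gb = gauss_prod_bound[where c="\<lambda>j. lam j * th j" and b="\<lambda>j. lam j * eta j"
        and beta="\<lambda>j. a j / (4 * eps)" and s="sqrt eps" and J="{m0<..m}"
        and F="\<lambda>j. exp (1/2 + x j / (2 * eps))", OF se(1) finite_greaterThanAtMost qpos Fb]
    have i1: "integrable (data_law lam th eps) (h m)"
      unfolding DL h_def by (intro integrable_mult_right gb(1))
    have "integral\<^sup>L (data_law lam th eps) (h m) = exp (- 3 * C * (real m - real m0) / 4) *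
        (\<integral>Y. (\<Prod>j\<in>{m0<..m}. exp (a j / (4 * eps) * (Y j - lam j * eta j)^2)) \<partial>data_law lam th eps)"
      unfolding h_def by simp
    also have "\<dots> \<le> exp (- 3 * C * (real m - real m0) / 4) * (\<Prod>j\<in>{m0<..m}. exp (1/2 + x j / (2 * eps)))"
      unfolding DL by (intro mult_left_mono gb(2)) auto
    also have "(\<Prod>j\<in>{m0<..m}. exp (1/2 + x j / (2 * eps))) =
        exp ((real m - real m0)/2 + (\<Sum>j\<in>{m0<..m}. x j) / (2 * eps))"
      using mm(1) by (simp add: exp_sum[symmetric] sum.distrib sum_divide_distrib of_nat_diff)
    also have "exp (- 3 * C * (real m - real m0) / 4) * \<dots> =
        exp (- 3 * C * (real m - real m0) / 4 + ((real m - real m0)/2 + (\<Sum>j\<in>{m0<..m}. x j) / (2 * eps)))"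
      by (rule exp_add[symmetric])
    also have "\<dots> \<le> exp (- 4 * C / 9 * real m0)"
    proof -
      define k where "k = real m - real m0"
      define X where "X = (\<Sum>j\<in>{m0<..m}. x j)"
      have k0: "0 \<le> k" unfolding k_def using mm by simp
      have Xb: "X \<le> C / Lm * bias th eta m0"
      proof -
        have "X \<le> (\<Sum>j\<in>{m0<..m}. C / Lm * (th j - eta j)^2)"
          unfolding X_def x_def
        proof (intro sum_mono)
          fix j assume j: "j \<in> {m0<..m}"
          have "(lam j * th j - lam j * eta j)^2 = (lam j)^2 * (th j - eta j)^2"
            by (simp add: power_mult_distrib[symmetric] right_diff_distrib)
          also have "\<dots> \<le> C / Lm * (th j - eta j)^2" using lamC[of j] j by (intro mult_right_mono) auto
          finally show "(lam j * th j - lam j * eta j)^2 \<le> C / Lm * (th j - eta j)^2" .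
        qed
        also have "\<dots> = C / Lm * (\<Sum>j\<in>{m0<..m}. (th j - eta j)^2)" by (simp add: sum_distrib_left)
        also have "(\<Sum>j\<in>{m0<..m}. (th j - eta j)^2) \<le> bias th eta m0"
          using bias_split[OF l2 less_imp_le[OF mm(1)]] bias_nonneg[OF l2, of m] by simp
        then have "C / Lm * (\<Sum>j\<in>{m0<..m}. (th j - eta j)^2) \<le> C / Lm * bias th eta m0"
          using E_C cf(4) by (intro mult_left_mono) auto
        finally show ?thesis .
      qed
      have XQ: "X / eps \<le> C * Q"
      proof -
        have "C / Lm * bias th eta m0 \<le> C / Lm * P0" using cf(2) E_C cf(4) by (intro mult_left_mono) auto
        then have "X \<le> C / Lm * P0" using Xb by simp
        then have "X / eps \<le> C / Lm * P0 / eps" using eps by (intro divide_right_mono) auto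
        also have "\<dots> = C * Q" unfolding Q_def by simp
        finally show ?thesis .
      qed
      have Qm: "Q \<le> real m / 5"
      proof -
        have "5 * Q \<le> 5 * L * Q" using E_L Q0 by (simp add: mult_right_mono)
        then show ?thesis using mm(2) by simp
      qed
      have m5: "5 * real m0 \<le> real m"
      proof -
        have "5 * real m0 \<le> 5 * (L * Q)" using m0Q by simp
        then show ?thesis using mm(2) by simp
      qed
      have CQ: "C * Q \<le> C * (real m / 5)" using Qm E_C by (intro mult_left_mono) auto
      have Ck: "k \<le> C * k" using mult_right_mono[OF E_C k0] by simp
      have "- 3 * C * (real m - real m0) / 4 + ((real m - real m0)/2 + X / (2 * eps))
            = - 3 * (C * k) / 4 + k / 2 + (X / eps) / 2" unfolding k_def by simp
      also have "\<dots> \<le> - 3 * (C * k) / 4 + (C * k) / 2 + (C * (real m / 5)) / 2"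
        using lin_aux[OF Ck XQ CQ] .
      also have "\<dots> = C * (real m0 / 4 - 3 * real m / 20)" unfolding k_def by (rule ident_aux)
      also have "\<dots> \<le> C * (- 4 / 9 * real m0)"
        using m5 E_C by (intro mult_left_mono) auto
      also have "\<dots> = - 4 * C / 9 * real m0" by simp
      finally show ?thesis unfolding X_def by simp
    qed
    finally show ?thesis using i1 by simp
  qed
  have "(\<integral>Y. (\<Sum>m\<in>{m_plus lam th eta L eps<..Gn}. post_M lam tau eta C eps Y m) \<partial>data_law lam th eps)
     \<le> (\<integral>Y. (\<Sum>m\<in>{m_plus lam th eta L eps<..Gn}. h m Y) \<partial>data_law lam th eps)"
  proof (rule integral_le_nonint)
    show "integrable (data_law lam th eps) (\<lambda>Y. \<Sum>m\<in>{m_plus lam th eta L eps<..Gn}. h m Y)"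
      by (rule Bochner_Integration.integrable_sum) (use hint in blast)
    show "\<And>Y. (\<Sum>m\<in>{m_plus lam th eta L eps<..Gn}. post_M lam tau eta C eps Y m) \<le> (\<Sum>m\<in>{m_plus lam th eta L eps<..Gn}. h m Y)"
      using pw by (intro sum_mono) auto
    show "\<And>Y. 0 \<le> (\<Sum>m\<in>{m_plus lam th eta L eps<..Gn}. h m Y)"
      unfolding h_def by (intro sum_nonneg mult_nonneg_nonneg prod_nonneg) auto
  qed
  also have "\<dots> = (\<Sum>m\<in>{m_plus lam th eta L eps<..Gn}. integral\<^sup>L (data_law lam th eps) (h m))"
    by (rule Bochner_Integration.integral_sum) (use hint in blast)
  also have "\<dots> \<le> (\<Sum>m\<in>{m_plus lam th eta L eps<..Gn}. exp (- 4 * C / 9 * real m0))"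
    using hint by (intro sum_mono) auto
  also have "\<dots> = real (card {m_plus lam th eta L eps<..Gn}) * exp (- 4 * C / 9 * real m0)" by simp
  also have "\<dots> \<le> real Gn * exp (- 4 * C / 9 * real m0)"
    by (intro mult_right_mono) auto
  also have "\<dots> = exp (- 4 * C / 9 * real m0 + ln (real Gn))"
  proof -
    have "0 < real Gn" using m1 mG' by simp
    then have eG: "exp (ln (real Gn)) = real Gn" by simp
    show ?thesis unfolding exp_add eG by simp
  qed
  also have "\<dots> \<le> 2 * exp (- (4 * C / 9) * real m0 + ln (real Gn))" by simp
  finally show ?thesis unfolding m0_def Gn_def .
qed

lemma lin_aux2:
  fixes u v Z :: real
  shows "0 \<le> v \<Longrightarrow> 0 \<le> u \<Longrightarrow> 7 * u / 6 \<le> Z \<Longrightarrow> - 3 * (v - u) / 4 - Z \<le> - 7 * u / 32"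
  by (simp add: field_simps)

lemma lin_aux3:
  fixes W P0 Dl bm bm0 :: real
  shows "P0 \<le> W \<Longrightarrow> Dl = bm - bm0 \<Longrightarrow> 8 * W < bm \<Longrightarrow> bm0 \<le> P0 \<Longrightarrow> 7 * W \<le> Dl"
  by linarith

lemma part_i:
  fixes lam th eta :: "nat \<Rightarrow> real" and tau :: "real \<Rightarrow> nat \<Rightarrow> real" and C L d eps :: real
  assumes eps: "0 < eps" "eps < 1"
    and lam_bdd: "\<exists>B. \<forall>j. \<bar>lam j\<bar> \<le> B"
    and lam_nz: "\<forall>j\<ge>1. lam j \<noteq> 0"
    and l2: "summable (\<lambda>j. (th j - eta j)^2)"
    and tpos: "\<forall>j\<ge>1. 0 < tau eps j"
    and A_d: "d > 0"
    and A: "\<forall>j\<in>{1..G lam eps}. tau eps j \<ge> d * max (sqrt (eps * Lam lam j)) (eps * Lam lam j)"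
    and E_C: "C \<ge> 1" and E_L: "L \<ge> 1"
    and E3: "\<forall>k\<ge>1. Lam_max lam k / Lam_bar lam k \<le> L"
    and mG: "m_opt lam th eta eps \<le> G lam eps"
  shows "(\<integral>Y. (\<Sum>m\<in>{1..<m_minus lam th eta C L d eps}. post_M lam tau eta C eps Y m)
          \<partial>data_law lam th eps)
        \<le> 2 * exp (- (7 * C / 32) * real (m_opt lam th eta eps) + ln (real (G lam eps)))"
proof -
  define m0 where "m0 = m_opt lam th eta eps"
  define P0 where "P0 = Phi_opt lam th eta eps"
  define Lm where "Lm = Lam_max lam (m_opt lam th eta eps)"
  define Gn where "Gn = G lam eps"
  define Q where "Q = P0 / (eps * Lm)"
  define T where "T = 8 * L * C * (1 + 1 / d) * P0"
  define dd where "dd = d / (1 + d)"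
  note cf = common_facts[OF eps(1) lam_bdd lam_nz l2 E_L E3, folded m0_def P0_def Lm_def]
  have m1: "1 \<le> m0" by (rule cf(1))
  have Q0: "0 \<le> Q" unfolding Q_def using cf(3,4) eps by simp
  have m0Q: "real m0 \<le> L * Q" unfolding Q_def by (rule cf(5))
  have mG': "m0 \<le> Gn" unfolding m0_def Gn_def by (rule mG)
  have LCd: "1 \<le> L * C * (1 + 1 / d)"
  proof -
    have "1 \<le> L * C" using E_L E_C by (metis mult_mono' mult_1 zero_le_one order_trans)
    moreover have "1 \<le> 1 + 1 / d" using A_d by simp
    ultimately show ?thesis using mult_mono[of 1 "L * C" 1 "1 + 1/d"] by simp
  qed
  define Sm where "Sm = {m \<in> {1..m0}. bias th eta m \<le> T}"
  have m0Sm: "m0 \<in> Sm"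
  proof -
    have "P0 \<le> T" unfolding T_def using LCd cf(3) mult_right_mono[OF LCd cf(3)] by simp
    then show ?thesis unfolding Sm_def using m1 cf(2) by simp
  qed
  have Smfin: "finite Sm" unfolding Sm_def by simp
  have mm_eq: "m_minus lam th eta C L d eps = Min Sm"
    unfolding m_minus_def Sm_def m0_def T_def P0_def ..
  have msmall: "1 \<le> m \<and> m < m0 \<and> T < bias th eta m" if m: "m \<in> {1..<m_minus lam th eta C L d eps}" for m
  proof -
    have "Min Sm \<le> m0" using m0Sm Smfin by simp
    then have "m < m0" using m mm_eq by simp
    moreover have "m \<notin> Sm" using m mm_eq Smfin by (metis Min_le atLeastLessThan_iff not_le)
    ultimately show ?thesis using m unfolding Sm_def by auto
  qed
  define a where "a j = sig lam tau eps j * (lam j)^2 / eps" for j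
  define h where "h m Y = exp (- 3 * C * (real m - real m0) / 4) *
      (\<Prod>j\<in>{m<..m0}. exp (- a j / (4 * eps) * (Y j - lam j * eta j)^2))" for m and Y :: "nat \<Rightarrow> real"
  have se: "0 < sqrt eps" "(sqrt eps)^2 = eps" using eps by auto
  have DL: "data_law lam th eps = PiM UNIV (\<lambda>j. density lborel (normal_density (lam j * th j) (sqrt eps)))"
    unfolding data_law_def ..
  have ab: "0 < a j \<and> a j < 1" if "1 \<le> j" for j
    unfolding a_def using a_bounds[of eps tau j lam] eps tpos lam_nz that by auto
  have alow: "dd \<le> a j" if "1 \<le> j" "j \<le> Gn" for j
  proof -
    have "tau eps j \<ge> d * max (sqrt (eps * Lam lam j)) (eps * Lam lam j)" using A that unfolding Gn_def by auto
    moreover have "d * (eps * Lam lam j) \<le> d * max (sqrt (eps * Lam lam j)) (eps * Lam lam j)"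
      using A_d by (intro mult_left_mono) auto
    ultimately have "tau eps j \<ge> d * (eps * Lam lam j)" by linarith
    then show ?thesis unfolding dd_def a_def using a_lower[of eps tau j lam d] eps tpos lam_nz that A_d by auto
  qed
  have pw: "post_M lam tau eta C eps Y m \<le> h m Y" if m: "m \<in> {1..<m_minus lam th eta C L d eps}" for m Y
  proof -
    have mm: "1 \<le> m" "m < m0" using msmall[OF m] by auto
    have "post_M lam tau eta C eps Y m \<le>
      exp ((sig_normsq (sig lam tau eps) (\<lambda>j. thetahat lam tau eta eps Y m j - eta j) -
            sig_normsq (sig lam tau eps) (\<lambda>j. thetahat lam tau eta eps Y m0 j - eta j))/4
           - 3 * C * (real m - real m0)/4)"
      using mm m1 mG' unfolding Gn_def by (intro post_bound) auto
    also have "sig_normsq (sig lam tau eps) (\<lambda>j. thetahat lam tau eta eps Y m j - eta j) -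
            sig_normsq (sig lam tau eps) (\<lambda>j. thetahat lam tau eta eps Y m0 j - eta j)
          = - (\<Sum>j\<in>{m<..m0}. a j * (Y j - lam j * eta j)^2 / eps)"
      unfolding SN_formula[where tau=tau and eps=eps, OF eps(1) tpos] a_def sum_split_ivl[OF less_imp_le[OF mm(2)]] by simp
    also have "(- (\<Sum>j\<in>{m<..m0}. a j * (Y j - lam j * eta j)^2 / eps)) / 4 =
        (\<Sum>j\<in>{m<..m0}. - a j / (4 * eps) * (Y j - lam j * eta j)^2)"
      by (simp add: sum_divide_distrib mult.commute sum_negf)
    also have "exp ((\<Sum>j\<in>{m<..m0}. - a j / (4 * eps) * (Y j - lam j * eta j)^2) - 3 * C * (real m - real m0)/4)
        = h m Y"
    proof -
      have "exp ((\<Sum>j\<in>{m<..m0}. - a j / (4 * eps) * (Y j - lam j * eta j)^2) - 3 * C * (real m - real m0)/4)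
        = exp (- 3 * C * (real m - real m0) / 4 + (\<Sum>j\<in>{m<..m0}. - a j / (4 * eps) * (Y j - lam j * eta j)^2))"
        by (rule arg_cong[where f=exp]) linarith
      also have "\<dots> = exp (- 3 * C * (real m - real m0) / 4) * exp (\<Sum>j\<in>{m<..m0}. - a j / (4 * eps) * (Y j - lam j * eta j)^2)"
        by (rule exp_add)
      also have "exp (\<Sum>j\<in>{m<..m0}. - a j / (4 * eps) * (Y j - lam j * eta j)^2) =
          (\<Prod>j\<in>{m<..m0}. exp (- a j / (4 * eps) * (Y j - lam j * eta j)^2))"
        by (rule exp_sum) simp
      finally show ?thesis unfolding h_def .
    qed
    finally show ?thesis .
  qed
  have hint: "integrable (data_law lam th eps) (h m)
      \<and> integral\<^sup>L (data_law lam th eps) (h m) \<le> exp (- 7 * C / 32 * real m0)"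
    if m: "m \<in> {1..<m_minus lam th eta C L d eps}" for m
  proof -
    have mm: "1 \<le> m" "m < m0" "T < bias th eta m" using msmall[OF m] by auto
    define x where "x j = (lam j * th j - lam j * eta j)^2" for j
    have qpos: "\<And>j. j \<in> {m<..m0} \<Longrightarrow> 1 - 2 * (- a j / (4 * eps)) * (sqrt eps)^2 > 0"
    proof -
      fix j assume j: "j \<in> {m<..m0}"
      then have "0 < a j" using ab mm by auto
      then show "1 - 2 * (- a j / (4 * eps)) * (sqrt eps)^2 > 0" using se eps by simp
    qed
    have Fb: "\<And>j. j \<in> {m<..m0} \<Longrightarrow>
        exp (- a j / (4 * eps) * (lam j * th j - lam j * eta j)^2/(1 - 2 * (- a j / (4 * eps)) * (sqrt eps)^2)) /
          sqrt (1 - 2 * (- a j / (4 * eps)) * (sqrt eps)^2) \<le> exp (- (dd * x j / (6 * eps)))"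
    proof -
      fix j assume j: "j \<in> {m<..m0}"
      have "1 \<le> j" "j \<le> Gn" using j mm mG' by auto
      then show "exp (- a j / (4 * eps) * (lam j * th j - lam j * eta j)^2/(1 - 2 * (- a j / (4 * eps)) * (sqrt eps)^2)) /
          sqrt (1 - 2 * (- a j / (4 * eps)) * (sqrt eps)^2) \<le> exp (- (dd * x j / (6 * eps)))"
        unfolding x_def using ab alow eps fac_down[of "a j" eps "(lam j * th j - lam j * eta j)^2" dd] by auto
    qed
    note gb = gauss_prod_bound[where c="\<lambda>j. lam j * th j" and b="\<lambda>j. lam j * eta j"
        and beta="\<lambda>j. - a j / (4 * eps)" and s="sqrt eps" and J="{m<..m0}"
        and F="\<lambda>j. exp (- (dd * x j / (6 * eps)))", OF se(1) finite_greaterThanAtMost qpos Fb]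
    have i1: "integrable (data_law lam th eps) (h m)"
      unfolding DL h_def by (intro integrable_mult_right gb(1))
    have "integral\<^sup>L (data_law lam th eps) (h m) = exp (- 3 * C * (real m - real m0) / 4) *
        (\<integral>Y. (\<Prod>j\<in>{m<..m0}. exp (- a j / (4 * eps) * (Y j - lam j * eta j)^2)) \<partial>data_law lam th eps)"
      unfolding h_def by simp
    also have "\<dots> \<le> exp (- 3 * C * (real m - real m0) / 4) * (\<Prod>j\<in>{m<..m0}. exp (- (dd * x j / (6 * eps))))"
      unfolding DL by (intro mult_left_mono gb(2)) auto
    also have "(\<Prod>j\<in>{m<..m0}. exp (- (dd * x j / (6 * eps)))) = exp (- (\<Sum>j\<in>{m<..m0}. dd * x j / (6 * eps)))"
      by (simp add: exp_sum[symmetric] sum_negf)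
    also have "exp (- 3 * C * (real m - real m0) / 4) * \<dots> =
        exp (- 3 * C * (real m - real m0) / 4 + - (\<Sum>j\<in>{m<..m0}. dd * x j / (6 * eps)))"
      by (rule exp_add[symmetric])
    also have "\<dots> \<le> exp (- 7 * C / 32 * real m0)"
    proof -
      define Dl where "Dl = (\<Sum>j\<in>{m<..m0}. (th j - eta j)^2)"
      define X where "X = (\<Sum>j\<in>{m<..m0}. x j)"
      have Dl1: "Dl = bias th eta m - bias th eta m0"
        unfolding Dl_def using bias_split[OF l2 less_imp_le[OF mm(2)]] by simp
      have Dl2: "7 * L * C * (1 + 1 / d) * P0 \<le> Dl"
      proof -
        have "P0 \<le> L * C * (1 + 1 / d) * P0" using mult_right_mono[OF LCd cf(3)] by simp
        moreover have "8 * L * C * (1 + 1 / d) * P0 = 8 * (L * C * (1 + 1 / d) * P0)"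
          "7 * L * C * (1 + 1 / d) * P0 = 7 * (L * C * (1 + 1 / d) * P0)" by simp_all
        ultimately show ?thesis using lin_aux3[of P0 "L * C * (1 + 1 / d) * P0" Dl "bias th eta m" "bias th eta m0"]
          Dl1 mm(3) cf(2) unfolding T_def by simp
      qed
      have XD: "Dl / Lm \<le> X"
      proof -
        have "Dl / Lm = (\<Sum>j\<in>{m<..m0}. (th j - eta j)^2 / Lm)" unfolding Dl_def by (simp add: sum_divide_distrib)
        also have "\<dots> \<le> X" unfolding X_def x_def
        proof (intro sum_mono)
          fix j assume j: "j \<in> {m<..m0}"
          have j1: "j \<in> {1..m0}" using j mm by auto
          have Lj: "0 < Lam lam j" using lam_nz j1 by (intro Lam_pos) auto
          have "1 / Lm \<le> 1 / Lam lam j" using cf(6)[OF j1] Lj by (intro divide_left_mono) auto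
          also have "1 / Lam lam j = (lam j)^2" unfolding Lam_def by simp
          finally have "(th j - eta j)^2 * (1 / Lm) \<le> (th j - eta j)^2 * (lam j)^2" by (intro mult_left_mono) auto
          moreover have "(lam j * th j - lam j * eta j)^2 = (th j - eta j)^2 * (lam j)^2"
            by (simp add: power2_eq_square algebra_simps)
          ultimately show "(th j - eta j)^2 / Lm \<le> (lam j * th j - lam j * eta j)^2" by simp
        qed
        finally show ?thesis .
      qed
      have sumx: "(\<Sum>j\<in>{m<..m0}. dd * x j / (6 * eps)) = dd * X / (6 * eps)"
        unfolding X_def by (simp add: sum_divide_distrib sum_distrib_left)
      have dd0: "0 < dd" unfolding dd_def using A_d by simp
      have Z1: "dd * (Dl / Lm) / (6 * eps) \<le> dd * X / (6 * eps)"
        using XD dd0 eps by (intro divide_right_mono mult_left_mono) auto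
      have Z2: "dd * ((7 * L * C * (1 + 1 / d) * P0) / Lm) / (6 * eps) \<le> dd * (Dl / Lm) / (6 * eps)"
        using Dl2 dd0 eps cf(4) by (intro divide_right_mono mult_left_mono) auto
      have Z3: "dd * ((7 * L * C * (1 + 1 / d) * P0) / Lm) / (6 * eps) = 7 * C * (L * Q) / 6"
      proof -
        have dpos: "0 < d + d * d" using A_d by (simp add: add_pos_pos)
        have "dd * (1 + 1/d) = 1" unfolding dd_def using A_d dpos by (simp add: field_simps)
        moreover have "dd * ((7 * L * C * (1 + 1 / d) * P0) / Lm) / (6 * eps) =
            (dd * (1 + 1/d)) * (7 * L * C * P0 / (6 * eps * Lm))" by (simp add: field_simps)
        moreover have "7 * C * (L * Q) / 6 = 7 * L * C * P0 / (6 * eps * Lm)" unfolding Q_def by (simp add: ac_simps)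
        ultimately show ?thesis by (metis mult_1)
      qed
      have Z4: "7 * C * real m0 / 6 \<le> 7 * C * (L * Q) / 6"
        using m0Q E_C by (intro divide_right_mono mult_left_mono) auto
      have Z5: "7 * C * real m0 / 6 \<le> dd * X / (6 * eps)"
        using order_trans[OF order_trans[OF Z4[unfolded Z3[symmetric]] Z2] Z1] .
      have Z: "7 * (C * real m0) / 6 \<le> (\<Sum>j\<in>{m<..m0}. dd * x j / (6 * eps))"
        unfolding sumx using Z5 by (simp add: mult.assoc)
      have e: "- 3 * C * (real m - real m0) / 4 = - 3 * (C * real m - C * real m0) / 4"
        by (simp add: algebra_simps)
      have "- 3 * C * (real m - real m0) / 4 + - (\<Sum>j\<in>{m<..m0}. dd * x j / (6 * eps)) \<le> - 7 * (C * real m0) / 32"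
        unfolding e using lin_aux2[OF _ _ Z] E_C by simp
      then show ?thesis by simp
    qed
    finally show ?thesis using i1 by simp
  qed
  have "(\<integral>Y. (\<Sum>m\<in>{1..<m_minus lam th eta C L d eps}. post_M lam tau eta C eps Y m) \<partial>data_law lam th eps)
     \<le> (\<integral>Y. (\<Sum>m\<in>{1..<m_minus lam th eta C L d eps}. h m Y) \<partial>data_law lam th eps)"
  proof (rule integral_le_nonint)
    show "integrable (data_law lam th eps) (\<lambda>Y. \<Sum>m\<in>{1..<m_minus lam th eta C L d eps}. h m Y)"
      by (rule Bochner_Integration.integrable_sum) (use hint in blast)
    show "\<And>Y. (\<Sum>m\<in>{1..<m_minus lam th eta C L d eps}. post_M lam tau eta C eps Y m) \<le> (\<Sum>m\<in>{1..<m_minus lam th eta C L d eps}. h m Y)"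
      using pw by (intro sum_mono) auto
    show "\<And>Y. 0 \<le> (\<Sum>m\<in>{1..<m_minus lam th eta C L d eps}. h m Y)"
      unfolding h_def by (intro sum_nonneg mult_nonneg_nonneg prod_nonneg) auto
  qed
  also have "\<dots> = (\<Sum>m\<in>{1..<m_minus lam th eta C L d eps}. integral\<^sup>L (data_law lam th eps) (h m))"
    by (rule Bochner_Integration.integral_sum) (use hint in blast)
  also have "\<dots> \<le> (\<Sum>m\<in>{1..<m_minus lam th eta C L d eps}. exp (- 7 * C / 32 * real m0))"
    using hint by (intro sum_mono) auto
  also have "\<dots> = real (card {1..<m_minus lam th eta C L d eps}) * exp (- 7 * C / 32 * real m0)" by simp
  also have "\<dots> \<le> real Gn * exp (- 7 * C / 32 * real m0)"
  proof -
    have "{1..<m_minus lam th eta C L d eps} \<subseteq> {1..Gn}" using msmall mG' by fastforce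
    then have "card {1..<m_minus lam th eta C L d eps} \<le> card {1..Gn}" by (intro card_mono) auto
    then show ?thesis by (intro mult_right_mono) auto
  qed
  also have "\<dots> = exp (- 7 * C / 32 * real m0 + ln (real Gn))"
  proof -
    have "0 < real Gn" using m1 mG' by simp
    then have eG: "exp (ln (real Gn)) = real Gn" by simp
    show ?thesis unfolding exp_add eG by simp
  qed
  also have "\<dots> \<le> 2 * exp (- (7 * C / 32) * real m0 + ln (real Gn))" by simp
  finally show ?thesis unfolding m0_def Gn_def .
qed


theorem mainTheorem11:
  fixes lam th eta :: "nat \<Rightarrow> real" and tau :: "real \<Rightarrow> nat \<Rightarrow> real"
    and d C L eps_th :: real
  assumes lam_bdd: "\<exists>B. \<forall>j. \<bar>lam j\<bar> \<le> B"
    and lam_nz: "\<forall>j\<ge>1. lam j \<noteq> 0"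
    and th_l2: "summable (\<lambda>j. (th j)^2)"
    and th_eta_l2: "summable (\<lambda>j. (th j - eta j)^2)"
    and tau_pos: "\<forall>eps. 0 < eps \<and> eps < 1 \<longrightarrow> (\<forall>j\<ge>1. 0 < tau eps j)"
    and A_d: "d > 0"
    and A: "\<forall>eps. 0 < eps \<and> eps < 1 \<longrightarrow> (\<forall>j\<in>{1..G lam eps}.
              tau eps j \<ge> d * max (sqrt (eps * Lam lam j)) (eps * Lam lam j))"
    and E_C: "C \<ge> 1" and E_L: "L \<ge> 1"
    and E1: "\<forall>k\<ge>1. (SUP j\<in>{k<..}. (lam j)^2) \<le> C * Min ((\<lambda>j. (lam j)^2) ` {1..k})"
    and E2: "\<forall>k\<ge>1. \<forall>l\<ge>1. Lam_max lam (k * l) \<le> Lam_max lam k * Lam_max lam l"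
    and E3: "\<forall>k\<ge>1. Lam_max lam k / Lam_bar lam k \<le> L"
    and eps_th: "0 < eps_th" "eps_th < 1"
    and mG: "\<forall>eps. 0 < eps \<and> eps < eps_th \<longrightarrow> m_opt lam th eta eps \<le> G lam eps"
  shows "\<forall>eps. 0 < eps \<and> eps < eps_th \<longrightarrow>
     ((\<integral>Y. (\<Sum>m\<in>{1..<m_minus lam th eta C L d eps}. post_M lam tau eta C eps Y m)
          \<partial>data_law lam th eps)
        \<le> 2 * exp (- (7 * C / 32) * real (m_opt lam th eta eps) + ln (real (G lam eps)))
      \<and> 2 * exp (- (7 * C / 32) * real (m_opt lam th eta eps) + ln (real (G lam eps)))
        \<le> 2 * exp (- (C / 5) * real (m_opt lam th eta eps) + ln (real (G lam eps))))
   \<and> ((\<integral>Y. (\<Sum>m\<in>{m_plus lam th eta L eps<..G lam eps}. post_M lam tau eta C eps Y m)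
          \<partial>data_law lam th eps)
        \<le> 2 * exp (- (4 * C / 9) * real (m_opt lam th eta eps) + ln (real (G lam eps)))
      \<and> 2 * exp (- (4 * C / 9) * real (m_opt lam th eta eps) + ln (real (G lam eps)))
        \<le> 2 * exp (- (C / 5) * real (m_opt lam th eta eps) + ln (real (G lam eps))))"
proof (intro allI impI)
  fix eps :: real assume e: "0 < eps \<and> eps < eps_th"
  then have eps: "0 < eps" "eps < 1" using eps_th by auto
  have tp: "\<forall>j\<ge>1. 0 < tau eps j" using tau_pos eps by auto
  have A': "\<forall>j\<in>{1..G lam eps}. tau eps j \<ge> d * max (sqrt (eps * Lam lam j)) (eps * Lam lam j)"
    using A eps by auto
  have mG': "m_opt lam th eta eps \<le> G lam eps" using mG e by auto
  have c1: "C / 5 * real (m_opt lam th eta eps) \<le> 7 * C / 32 * real (m_opt lam th eta eps)"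
    using E_C by (intro mult_right_mono) auto
  have c2: "C / 5 * real (m_opt lam th eta eps) \<le> 4 * C / 9 * real (m_opt lam th eta eps)"
    using E_C by (intro mult_right_mono) auto
  show "((\<integral>Y. (\<Sum>m\<in>{1..<m_minus lam th eta C L d eps}. post_M lam tau eta C eps Y m)
          \<partial>data_law lam th eps)
        \<le> 2 * exp (- (7 * C / 32) * real (m_opt lam th eta eps) + ln (real (G lam eps)))
      \<and> 2 * exp (- (7 * C / 32) * real (m_opt lam th eta eps) + ln (real (G lam eps)))
        \<le> 2 * exp (- (C / 5) * real (m_opt lam th eta eps) + ln (real (G lam eps))))
   \<and> ((\<integral>Y. (\<Sum>m\<in>{m_plus lam th eta L eps<..G lam eps}. post_M lam tau eta C eps Y m)
          \<partial>data_law lam th eps)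
        \<le> 2 * exp (- (4 * C / 9) * real (m_opt lam th eta eps) + ln (real (G lam eps)))
      \<and> 2 * exp (- (4 * C / 9) * real (m_opt lam th eta eps) + ln (real (G lam eps)))
        \<le> 2 * exp (- (C / 5) * real (m_opt lam th eta eps) + ln (real (G lam eps))))"
    using part_i[where tau=tau and eps=eps and lam=lam and th=th and eta=eta and C=C and L=L and d=d, OF eps lam_bdd lam_nz th_eta_l2 tp A_d A' E_C E_L E3 mG']
      part_ii[where tau=tau and eps=eps and lam=lam and th=th and eta=eta and C=C and L=L, OF eps lam_bdd lam_nz th_eta_l2 tp E_C E_L E1 E3 mG'] c1 c2
    by auto
qed

end
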